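(* Fix $i\in[n]$ and $\mathbf{x}_{-i}\in\mathcal{C}_{-i}$, let $A=A(\mathbf{x}_{-i})$ and $\mathcal{R}_A=\prod_{j\in A}(0,\omega_{ij}-\mathbf{x}_T^{j|i})$. Then the function $(x_{ij})_{j\in A}\mapsto\sum_{j\in A}x_{ij}^{a_i}\mathcal{F}_{ij}(x_{ij}+\mathbf{x}_T^{j|i})$ is concave on $\mathcal{R}_A$.
   Context: Fragile multi-CPR Game: $n,m\ge1$, $[k]=\{1,\dots,k\}$, $C_m=\{(x_1,\dots,x_m)\in[0,1]^m:\sum_j x_j\le1\}$, $\mathcal{C}_{-i}=\prod_{[n]\setminus\{i\}}C_m$; for $\mathbf{x}_{-i}=(\mathbf{x}_\ell)_{\ell\ne i}$ with $\mathbf{x}_\ell=(x_{\ell1},\dots,x_{\ell m})$ put $\mathbf{x}_T^{j|i}=\sum_{\ell\ne i}x_{\ell j}$. Each CPR $j$ has a return rate $\mathcal{R}_j(t)>1$ and failure probability $p_j(t)\in[0,1]$; each player $i$ has parameters $a_i,k_i$. Effective rate: $\mathcal{F}_{ij}(t)=(\mathcal{R}_j(t)-1)^{a_i}(1-p_j(t))-k_ip_j(t)$. Assumption: (1) $p_j(0)=0$, $p_j(t)=1$ for $t\ge1$; (2) $a_i\in(0,1]$, $k_i>0$; (3) each $\mathcal{F}_{ij}$ (continuous on $[0,1]$) has strictly negative first and second derivatives on $(0,1)$. Let $\omega_{ij}\in(0,1)$ be the unique zero of $\mathcal{F}_{ij}$ in $(0,1)$ (so $\mathcal{F}_{ij}>0$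 on $[0,\omega_{ij})$). Active CPRs: $A(\mathbf{x}_{-i})=\{j\in[m]:\mathbf{x}_T^{j|i}<\omega_{ij}\}$. *)

theory Defs
  imports "HOL-Analysis.Analysis"
begin

text \<open>Players are indexed by a finite type 'n, CPRs by a finite type 'm
  (so n = CARD('n) \<ge> 1, m = CARD('m) \<ge> 1).  A strategy profile is
  x :: 'n \<Rightarrow> 'm \<Rightarrow> real, with x l j the investment of player l in CPR j.\<close>

definition in_simplex :: "('m::finite \<Rightarrow> real) \<Rightarrow> bool" where
  "in_simplex v \<longleftrightarrow> (\<forall>j. 0 \<le> v j \<and> v j \<le> 1) \<and> (\<Sum>j\<in>UNIV. v j) \<le> 1"

definition others_feasible :: "('n::finite \<Rightarrow> 'm::finite \<Rightarrow> real) \<Rightarrow> 'n \<Rightarrow> bool" where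
  "others_feasible x i \<longleftrightarrow> (\<forall>l. l \<noteq> i \<longrightarrow> in_simplex (x l))"

definition total_others :: "('n::finite \<Rightarrow> 'm \<Rightarrow> real) \<Rightarrow> 'n \<Rightarrow> 'm \<Rightarrow> real" where
  "total_others x i j = (\<Sum>l\<in>UNIV - {i}. x l j)"

definition Feff :: "('m \<Rightarrow> real \<Rightarrow> real) \<Rightarrow> ('m \<Rightarrow> real \<Rightarrow> real) \<Rightarrow> ('n \<Rightarrow> real) \<Rightarrow> ('n \<Rightarrow> real)
    \<Rightarrow> 'n \<Rightarrow> 'm \<Rightarrow> real \<Rightarrow> real" where
  "Feff R p a k i j t = (R j t - 1) powr (a i) * (1 - p j t) - k i * p j t"

definition omega :: "('m \<Rightarrow> real \<Rightarrow> real) \<Rightarrow> ('m \<Rightarrow> real \<Rightarrow> real) \<Rightarrow> ('n \<Rightarrow> real) \<Rightarrow> ('n \<Rightarrow> real)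
    \<Rightarrow> 'n \<Rightarrow> 'm \<Rightarrow> real" where
  "omega R p a k i j = (THE w. 0 < w \<and> w < 1 \<and> Feff R p a k i j w = 0)"

definition active :: "('m \<Rightarrow> real \<Rightarrow> real) \<Rightarrow> ('m \<Rightarrow> real \<Rightarrow> real) \<Rightarrow> ('n::finite \<Rightarrow> real) \<Rightarrow> ('n \<Rightarrow> real)
    \<Rightarrow> ('n \<Rightarrow> 'm::finite \<Rightarrow> real) \<Rightarrow> 'n \<Rightarrow> 'm set" where
  "active R p a k x i = {j. total_others x i j < omega R p a k i j}"

text \<open>The box R_A = prod_{j in A} (0, omega_ij - x_T^{j|i}), embedded in real^'m
  by setting the coordinates outside A to 0.\<close>
definition box_A :: "('m \<Rightarrow> real \<Rightarrow> real) \<Rightarrow> ('m \<Rightarrow> real \<Rightarrow> real) \<Rightarrow> ('n::finite \<Rightarrow> real) \<Rightarrow> ('n \<Rightarrow> real)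
    \<Rightarrow> ('n \<Rightarrow> 'm::finite \<Rightarrow> real) \<Rightarrow> 'n \<Rightarrow> (real^'m) set" where
  "box_A R p a k x i = {y. \<forall>j. (j \<in> active R p a k x i \<longrightarrow>
        0 < y $ j \<and> y $ j < omega R p a k i j - total_others x i j)
      \<and> (j \<notin> active R p a k x i \<longrightarrow> y $ j = 0)}"

definition utility_A :: "('m \<Rightarrow> real \<Rightarrow> real) \<Rightarrow> ('m \<Rightarrow> real \<Rightarrow> real) \<Rightarrow> ('n::finite \<Rightarrow> real) \<Rightarrow> ('n \<Rightarrow> real)
    \<Rightarrow> ('n \<Rightarrow> 'm::finite \<Rightarrow> real) \<Rightarrow> 'n \<Rightarrow> real^'m \<Rightarrow> real" where
  "utility_A R p a k x i y = (\<Sum>j\<in>active R p a k x i.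
      (y $ j) powr (a i) * Feff R p a k i j (y $ j + total_others x i j))"

end

theory Submission
  imports Defs
begin

lemma decr_lemma:
  fixes F :: "real \<Rightarrow> real"
  assumes cont: "continuous_on {0..1} F"
    and der: "\<forall>t\<in>{0<..<1}. (F has_real_derivative F' t) (at t) \<and> F' t < 0"
    and st: "0 \<le> s" "s < t" "t \<le> 1"
  shows "F t < F s"
proof (rule DERIV_neg_imp_decreasing_open[OF st(2)])
  show "continuous_on {s..t} F" by (rule continuous_on_subset[OF cont]) (use st in auto)
  show "\<exists>y. (F has_real_derivative y) (at x) \<and> y < 0" if "s < x" "x < t" for x
    using der that st by auto
qed

lemma one_dim:
  fixes F :: "real \<Rightarrow> real" and \<alpha> w T :: real
  assumes cont: "continuous_on {0..1} F"
    and der: "\<forall>t\<in>{0<..<1}. (F has_real_derivative F' t) (at t) \<and> F' t < 0 \<and>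
        (F' has_real_derivative F'' t) (at t) \<and> F'' t < 0"
    and w: "0 < w" "w < 1" "F w = 0"
    and T: "0 \<le> T" "T < w"
    and al: "0 < \<alpha>" "\<alpha> \<le> 1"
  shows "concave_on {0<..<w-T} (\<lambda>y. y powr \<alpha> * F (y+T))"
proof (rule concave_on_mul)
  let ?S = "{0<..<w-T}"
  have dec: "F t < F s" if "0 \<le> s" "s < t" "t \<le> 1" for s t
    using decr_lemma[OF cont _ that] der by blast
  have c1: "concave_on {0<..} (\<lambda>y::real. y powr \<alpha>)"
  proof (rule f''_le0_imp_concave)
    show "((\<lambda>y. y powr \<alpha>) has_real_derivative \<alpha> * y powr (\<alpha> - 1)) (at y)" if "y \<in> {0<..}" for y
      using that by (auto intro!: derivative_eq_intros)
    show "((\<lambda>y. \<alpha> * y powr (\<alpha> - 1)) has_real_derivative \<alpha> * ((\<alpha> - 1) * y powr (\<alpha> - 1 - 1))) (at y)" if "y \<in> {0<..}" for y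
      using that by (auto intro!: derivative_eq_intros)
    show "\<alpha> * ((\<alpha> - 1) * y powr (\<alpha> - 1 - 1)) \<le> 0" if "y \<in> {0<..}" for y
    proof -
      have "(\<alpha> - 1) * y powr (\<alpha> - 1 - 1) \<le> 0" by (rule mult_nonpos_nonneg) (use al in auto)
      then show ?thesis using al by (simp add: mult_nonneg_nonpos)
    qed
  qed auto
  show "concave_on ?S (\<lambda>y. y powr \<alpha>)"
    by (rule convex_on_subset[OF c1[unfolded concave_on_def], folded concave_on_def]) auto
  show "concave_on ?S (\<lambda>y. F (y + T))"
  proof (rule f''_le0_imp_concave)
    show "((\<lambda>y. F (y + T)) has_real_derivative F' (y + T)) (at y)" if "y \<in> ?S" for y
      using that der T w by (subst DERIV_shift[symmetric]) auto
    show "(((\<lambda>y. F' (y + T))) has_real_derivative F'' (y + T)) (at y)" if "y \<in> ?S" for y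
      using that der T w by (subst DERIV_shift[symmetric]) auto
    show "F'' (y + T) \<le> 0" if "y \<in> ?S" for y
      using that der T w by (metis greaterThanLessThan_iff add_pos_nonneg less_diff_eq less_trans less_imp_le)
  qed auto
  show "mono_on ?S (\<lambda>y. y powr \<alpha>)"
    by (rule monotone_onI) (use al in \<open>auto intro: powr_mono2\<close>)
  show "antimono_on ?S (\<lambda>y. F (y + T))"
    by (rule monotone_onI) (use T w in \<open>auto intro!: less_imp_le dec simp: le_less\<close>)
  show "(\<lambda>y. y powr \<alpha>) \<in> ?S \<rightarrow> {0..}" by auto
  show "(\<lambda>y. F (y + T)) \<in> ?S \<rightarrow> {0..}"
  proof
    fix y assume "y \<in> ?S"
    then have "F w < F (y+T)" using T w by (intro dec) auto
    then show "F (y + T) \<in> {0..}" using w by auto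
  qed
qed

lemma conv_int:
  fixes a b c u v :: real
  assumes "0<a" "a<c" "0<b" "b<c" "u\<ge>0" "v\<ge>0" "u+v=1"
  shows "0 < u * a + v * b \<and> u * a + v * b < c"
proof -
  have "u * a + v * b \<in> {0<..<c}"
    using convexD[OF convex_real_interval(8)[of 0 c], of a b u v] assms by auto
  then show ?thesis by auto
qed

lemma omega_props:
  fixes R p :: "'m::finite \<Rightarrow> real \<Rightarrow> real"
    and a k :: "'n::finite \<Rightarrow> real"
  assumes R_gt1: "\<And>j t. t \<ge> 0 \<Longrightarrow> R j t > 1"
    and p0: "\<And>j. p j 0 = 0"
    and p1: "\<And>j t. t \<ge> 1 \<Longrightarrow> p j t = 1"
    and k_pos: "\<And>l. k l > 0"
    and F_cont: "continuous_on {0..1} (Feff R p a k i j)"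
    and der: "\<forall>t\<in>{0<..<1}. (Feff R p a k i j has_real_derivative F' t) (at t) \<and> F' t < 0"
  shows "0 < omega R p a k i j \<and> omega R p a k i j < 1 \<and> Feff R p a k i j (omega R p a k i j) = 0"
proof -
  let ?F = "Feff R p a k i j"
  have dec: "?F t < ?F s" if "0 \<le> s" "s < t" "t \<le> 1" for s t
    using decr_lemma[OF F_cont der that] .
  have F0: "?F 0 > 0" using R_gt1[of 0 j] p0[of j] by (simp add: Feff_def)
  have F1: "?F 1 < 0" using p1[of 1 j] k_pos[of i] by (simp add: Feff_def)
  obtain w where w: "0 \<le> w" "w \<le> 1" "?F w = 0"
    using IVT2'[of ?F 1 0 0, OF _ _ _ F_cont] F0 F1 by auto
  have w': "0 < w" "w < 1" using w F0 F1 by (auto simp: le_less)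
  have "(THE w. 0 < w \<and> w < 1 \<and> ?F w = 0) = w"
  proof (rule the_equality)
    show "0 < w \<and> w < 1 \<and> ?F w = 0" using w w' by auto
    fix z assume z: "0 < z \<and> z < 1 \<and> ?F z = 0"
    show "z = w"
    proof (rule ccontr)
      assume "z \<noteq> w"
      then consider "z < w" | "w < z" by linarith
      then show False
        using dec[of z w] dec[of w z] z w w' by cases auto
    qed
  qed
  then show ?thesis using w w' by (simp add: omega_def)
qed

theorem theorem5:
  fixes R p :: "'m::finite \<Rightarrow> real \<Rightarrow> real"
    and a k :: "'n::finite \<Rightarrow> real"
    and x :: "'n \<Rightarrow> 'm \<Rightarrow> real"
    and i :: 'n
  assumes R_gt1: "\<And>j t. t \<ge> 0 \<Longrightarrow> R j t > 1"
    and p_range: "\<And>j t. t \<ge> 0 \<Longrightarrow> 0 \<le> p j t \<and> p j t \<le> 1"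
    and p0: "\<And>j. p j 0 = 0"
    and p1: "\<And>j t. t \<ge> 1 \<Longrightarrow> p j t = 1"
    and a_range: "\<And>l. 0 < a l \<and> a l \<le> 1"
    and k_pos: "\<And>l. k l > 0"
    and F_cont: "\<And>l j. continuous_on {0..1} (Feff R p a k l j)"
    and F_deriv: "\<And>l j. \<exists>F' F''. \<forall>t\<in>{0<..<1}.
        (Feff R p a k l j has_real_derivative F' t) (at t) \<and> F' t < 0 \<and>
        (F' has_real_derivative F'' t) (at t) \<and> F'' t < 0"
    and feas: "others_feasible x i"
  shows "concave_on (box_A R p a k x i) (utility_A R p a k x i)"
proof -
  define A where "A = active R p a k x i"
  define T where "T j = total_others x i j" for j
  define w where "w j = omega R p a k i j" for j
  define g where "g j y = y powr (a i) * Feff R p a k i j (y + T j)" for j y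
  have T0: "T j \<ge> 0" for j
    unfolding T_def total_others_def
    using feas by (intro sum_nonneg) (auto simp: others_feasible_def in_simplex_def)
  have wp: "0 < w j \<and> w j < 1 \<and> Feff R p a k i j (w j) = 0" for j
  proof -
    obtain F' F'' where d: "\<forall>t\<in>{0<..<1}.
        (Feff R p a k i j has_real_derivative F' t) (at t) \<and> F' t < 0 \<and>
        (F' has_real_derivative F'' t) (at t) \<and> F'' t < 0" using F_deriv by blast
    show ?thesis unfolding w_def
      by (rule omega_props[OF R_gt1 p0 p1 k_pos F_cont]) (use d in auto)
  qed
  have gc: "concave_on {0<..<w j - T j} (g j)" if "j \<in> A" for j
  proof -
    obtain F' F'' where d: "\<forall>t\<in>{0<..<1}.
        (Feff R p a k i j has_real_derivative F' t) (at t) \<and> F' t < 0 \<and>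
        (F' has_real_derivative F'' t) (at t) \<and> F'' t < 0" using F_deriv by blast
    have "T j < w j" using that by (simp add: A_def active_def T_def w_def)
    then show ?thesis unfolding g_def
      using one_dim[OF F_cont d _ _ _ T0] wp[of j] a_range[of i] by auto
  qed
  have box: "box_A R p a k x i = {y. \<forall>j. (j \<in> A \<longrightarrow> 0 < y $ j \<and> y $ j < w j - T j) \<and> (j \<notin> A \<longrightarrow> y $ j = 0)}"
    by (simp add: box_A_def A_def w_def T_def)
  have ut: "utility_A R p a k x i y = (\<Sum>j\<in>A. g j (y $ j))" for y
    by (simp add: utility_A_def A_def g_def T_def)
  show ?thesis
    unfolding concave_on_iff box ut
  proof (intro conjI ballI allI impI)
    show "convex {y. \<forall>j. (j \<in> A \<longrightarrow> 0 < y $ j \<and> y $ j < w j - T j) \<and> (j \<notin> A \<longrightarrow> y $ j = 0)}"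
      unfolding convex_def
    proof (intro ballI allI impI)
      fix y1 y2 :: "real^'m" and u v :: real
      assume y1: "y1 \<in> {y. \<forall>j. (j \<in> A \<longrightarrow> 0 < y $ j \<and> y $ j < w j - T j) \<and> (j \<notin> A \<longrightarrow> y $ j = 0)}"
        and y2: "y2 \<in> {y. \<forall>j. (j \<in> A \<longrightarrow> 0 < y $ j \<and> y $ j < w j - T j) \<and> (j \<notin> A \<longrightarrow> y $ j = 0)}"
        and uv: "0 \<le> u" "0 \<le> v" "u + v = 1"
      show "u *\<^sub>R y1 + v *\<^sub>R y2 \<in> {y. \<forall>j. (j \<in> A \<longrightarrow> 0 < y $ j \<and> y $ j < w j - T j) \<and> (j \<notin> A \<longrightarrow> y $ j = 0)}"
        using y1 y2 conv_int[OF _ _ _ _ uv] by auto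
    qed
  next
    fix y1 y2 :: "real^'m" and u v :: real
    assume y1: "y1 \<in> {y. \<forall>j. (j \<in> A \<longrightarrow> 0 < y $ j \<and> y $ j < w j - T j) \<and> (j \<notin> A \<longrightarrow> y $ j = 0)}"
      and y2: "y2 \<in> {y. \<forall>j. (j \<in> A \<longrightarrow> 0 < y $ j \<and> y $ j < w j - T j) \<and> (j \<notin> A \<longrightarrow> y $ j = 0)}"
      and u: "0 \<le> u" and v: "0 \<le> v" and uv: "u + v = 1"
    have "u * (\<Sum>j\<in>A. g j (y1 $ j)) + v * (\<Sum>j\<in>A. g j (y2 $ j))
        = (\<Sum>j\<in>A. u * g j (y1 $ j) + v * g j (y2 $ j))"
      by (simp add: sum.distrib sum_distrib_left)
    also have "\<dots> \<le> (\<Sum>j\<in>A. g j ((u *\<^sub>R y1 + v *\<^sub>R y2) $ j))"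
    proof (rule sum_mono)
      fix j assume j: "j \<in> A"
      have "u * g j (y1 $ j) + v * g j (y2 $ j) \<le> g j (u *\<^sub>R (y1 $ j) + v *\<^sub>R (y2 $ j))"
        using gc[OF j, unfolded concave_on_iff] y1 y2 j u v uv by auto
      then show "u * g j (y1 $ j) + v * g j (y2 $ j) \<le> g j ((u *\<^sub>R y1 + v *\<^sub>R y2) $ j)"
        by simp
    qed
    finally show "u * (\<Sum>j\<in>A. g j (y1 $ j)) + v * (\<Sum>j\<in>A. g j (y2 $ j))
        \<le> (\<Sum>j\<in>A. g j ((u *\<^sub>R y1 + v *\<^sub>R y2) $ j))" .
  qed
qed

end
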